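(* Let $(\mathcal{A},\{\mu_n\}_{n\ge1})$ be an $A_\infty$-algebra and $\mathcal{N}:\mathcal{A}\to\mathcal{A}$ a strict homotopy Nijenhuis operator on it. For homogeneous $a_1,\dots,a_n$ and $S\subseteq\{1,\dots,n\}$ write $\mu_n^S(a_1,\dots,a_n)=\mu_n(c_1,\dots,c_n)$ with $c_i=a_i$ for $i\in S$ and $c_i=\mathcal{N}(a_i)$ for $i\notin S$. Define $\eta_n$ by $\eta_n([r];a_1,\dots,a_n)=\mu_n^{\{r\}}(a_1,\dots,a_n)$ for $1\le r\le n$, and, for $n\ge2$, $\eta_n([n+1];a_1,\dots,a_n)=\sum_{k=2}^n(-1)^{k-1}\mathcal{N}^{k-1}\big(\sum_{|S|=k}\mu_n^S(a_1,\dots,a_n)\big)$. Then $(\mathcal{A},\{\eta_n\}_{n\ge1})$ is an $NS_\infty$-algebra. As a consequence, $(\mathcal{A},\{\mu_{n,\mathcal{N}}\}_{n\ge1})$ is an $A_\infty$-algebra, where $\mu_{1,\mathcal{N}}=\mu_1$ and, for $n\ge2$, $\mu_{n,\mathcal{N}}(a_1,\dots,a_n)=\sum_{k=1}^n(-1)^{k-1}\mathcal{N}^{k-1}\big(\sum_{|S|=k}\mu_n^S(a_1,\dots,a_n)\big)$.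
   Context: Over a field of characteristic $0$. An $A_\infty$-algebra: graded vector space $\mathcal{A}$ with degree $n-2$ maps $\mu_n:\mathcal{A}^{\otimes n}\to\mathcal{A}$ such that for all $k\ge1$ and homogeneous $a_1,\dots,a_k$: $\sum_{m+n=k+1}\sum_{i=1}^m(-1)^{i(n+1)+n(|a_1|+\cdots+|a_{i-1}|)}\mu_m(a_1,\dots,a_{i-1},\mu_n(a_i,\dots,a_{i+n-1}),a_{i+n},\dots,a_k)=0$. A strict homotopy Nijenhuis operator is a degree $0$ linear $\mathcal{N}$ with $\mu_n(\mathcal{N}a_1,\dots,\mathcal{N}a_n)=\sum_{k=1}^n(-1)^{k-1}\mathcal{N}^k\big(\sum_{|S|=k}\mu_n^S(a_1,\dots,a_n)\big)$ for all $n\ge1$ and homogeneous $a_i$ (notation $\mu_n^S$ as in the claim). $NS_\infty$-algebras: let $C_n=\{[1],\dots,[n]\}$. $\mathcal{O}(1)=\mathrm{Hom}(\mathbf{k}[C_1]\otimes\mathcal{A},\mathcal{A})$, $\mathcal{O}(n)=\mathrm{Hom}(\mathbf{k}[C_{n+1}]\otimes\mathcal{A}^{\otimes n},\mathcal{A})$ ($n\ge2$); $C_1$, resp. $C_{n+1}$, is the index set of $\mathcal{O}(n)$. For $g\in\mathcal{O}(n)$, $g([*];-)$ is the sum of $g([j];-)$ over its index set and $g([j];-)=0$ for $[j]$ outside it. For $f\in\mathcal{O}(m)$, $g\in\mathcal{O}(n)$ (degrees $m-2$, $n-2$), $1\le i\le m$, homogeneous $a_1,\dots,a_{m+n-1}$,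 with $\varepsilon=(-1)^{n(|a_1|+\cdots+|a_{i-1}|)}$ and $\bar g_*=g([*];a_i,\dots,a_{i+n-1})$, $f\circ_ig\in\mathcal{O}(m+n-1)$ is $\varepsilon$ times: $f([r];a_1,\dots,a_{i-1},\bar g_*,a_{i+n},\dots)$ if $1\le r\le i-1$; $f([i];\dots,g([r-i+1];a_i,\dots,a_{i+n-1}),\dots)$ if $i\le r\le i+n-1$; $f([r-n+1];\dots,\bar g_*,\dots)$ if $i+n\le r\le m+n-1$; $f([i];\dots,g([n+1];a_i,\dots),\dots)+f([m+1];\dots,\bar g_*,\dots)$ if $r=m+n$. An $NS_\infty$-algebra is $(\mathcal{A},\{\eta_n\})$, $\eta_n\in\mathcal{O}(n)$ of degree $n-2$, with $\sum_{m+n=k+1}\sum_{i=1}^m(-1)^{i(n+1)}(\eta_m\circ_i\eta_n)([r];a_1,\dots,a_k)=0$ for all $k\ge1$, all $[r]$ in the index set of $\mathcal{O}(k)$, and homogeneous $a_i$. *)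

theory Defs
  imports Complex_Main
begin

definition graded_vs :: "('k::field_char_0 \<Rightarrow> 'v::ab_group_add \<Rightarrow> 'v) \<Rightarrow> (int \<Rightarrow> 'v set) \<Rightarrow> bool" where
  "graded_vs scale G \<longleftrightarrow>
     vector_space scale \<and>
     (\<forall>d. module.subspace scale (G d)) \<and>
     (\<forall>v. \<exists>!c :: int \<Rightarrow> 'v. finite {d. c d \<noteq> 0} \<and> (\<forall>d. c d \<in> G d) \<and> v = sum c {d. c d \<noteq> 0})"

definition homog :: "(int \<Rightarrow> 'v set) \<Rightarrow> nat \<Rightarrow> int list \<Rightarrow> 'v list \<Rightarrow> bool" where
  "homog G n ds as \<longleftrightarrow> length as = n \<and> length ds = n \<and> (\<forall>j<n. as ! j \<in> G (ds ! j))"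

text \<open>n-ary multilinear maps (an element of Hom(A^{\<otimes>n},A)), represented
  as functions on lists of length n.\<close>
definition multilinear :: "('k::field \<Rightarrow> 'v::ab_group_add \<Rightarrow> 'v) \<Rightarrow> nat \<Rightarrow> ('v list \<Rightarrow> 'v) \<Rightarrow> bool" where
  "multilinear scale n f \<longleftrightarrow>
     (\<forall>as j x y c. length as = n \<and> j < n \<longrightarrow>
        f (as[j := x + y]) = f (as[j := x]) + f (as[j := y]) \<and>
        f (as[j := scale c x]) = scale c (f (as[j := x])))"

definition has_degree :: "(int \<Rightarrow> 'v set) \<Rightarrow> nat \<Rightarrow> int \<Rightarrow> ('v list \<Rightarrow> 'v) \<Rightarrow> bool" where
  "has_degree G n e f \<longleftrightarrow> (\<forall>ds as. homog G n ds as \<longrightarrow> f as \<in> G (sum_list ds + e))"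

definition sgn1 :: "int \<Rightarrow> 'k::field" where
  "sgn1 z = (if even z then 1 else -1)"

text \<open>mu n is the n-ary operation mu_n (only n \<ge> 1 is relevant).\<close>
definition A_infinity :: "('k::field_char_0 \<Rightarrow> 'v::ab_group_add \<Rightarrow> 'v) \<Rightarrow> (int \<Rightarrow> 'v set)
    \<Rightarrow> (nat \<Rightarrow> 'v list \<Rightarrow> 'v) \<Rightarrow> bool" where
  "A_infinity scale G mu \<longleftrightarrow>
     graded_vs scale G \<and>
     (\<forall>n\<ge>1. multilinear scale n (mu n) \<and> has_degree G n (int n - 2) (mu n)) \<and>
     (\<forall>k\<ge>1. \<forall>ds as. homog G k ds as \<longrightarrow>
        (\<Sum>m\<in>{1..k}. let n = k + 1 - m in \<Sum>i\<in>{1..m}.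
           scale (sgn1 (int i * (int n + 1) + int n * sum_list (take (i - 1) ds)))
             (mu m (take (i - 1) as @ [mu n (take n (drop (i - 1) as))] @ drop (i - 1 + n) as))) = 0)"

text \<open>mu_n^S(a_1,...,a_n), with S a subset of {1..n} (1-based positions).\<close>
definition muS :: "(nat \<Rightarrow> 'v list \<Rightarrow> 'v) \<Rightarrow> ('v \<Rightarrow> 'v) \<Rightarrow> nat \<Rightarrow> nat set \<Rightarrow> 'v list \<Rightarrow> 'v" where
  "muS mu N n S as = mu n (map (\<lambda>j. if j \<in> S then as ! (j - 1) else N (as ! (j - 1))) [1..<n+1])"

definition strict_homotopy_Nijenhuis :: "('k::field_char_0 \<Rightarrow> 'v::ab_group_add \<Rightarrow> 'v) \<Rightarrow> (int \<Rightarrow> 'v set)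
    \<Rightarrow> (nat \<Rightarrow> 'v list \<Rightarrow> 'v) \<Rightarrow> ('v \<Rightarrow> 'v) \<Rightarrow> bool" where
  "strict_homotopy_Nijenhuis scale G mu N \<longleftrightarrow>
     Vector_Spaces.linear scale scale N \<and>
     (\<forall>d. N ` G d \<subseteq> G d) \<and>
     (\<forall>n\<ge>1. \<forall>ds as. homog G n ds as \<longrightarrow>
        mu n (map N as) =
        (\<Sum>k\<in>{1..n}. scale ((-1) ^ (k - 1))
           ((N ^^ k) (\<Sum>S\<in>{S. S \<subseteq> {1..n} \<and> card S = k}. muS mu N n S as))))"

text \<open>Index set of O(n): C_1 = {[1]} for n = 1, C_{n+1} = {[1],...,[n+1]} for n \<ge> 2.\<close>
definition idx :: "nat \<Rightarrow> nat set" where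
  "idx n = (if n = 1 then {1} else {1..n+1})"

text \<open>An element g of O(n) is represented as a function g :: nat \<Rightarrow> 'v list \<Rightarrow> 'v,
  g r as = g([r]; as).  Evaluation uses the convention that g([j];-) = 0 for
  [j] outside the index set.\<close>
definition ev :: "nat \<Rightarrow> (nat \<Rightarrow> 'v list \<Rightarrow> 'v::zero) \<Rightarrow> nat \<Rightarrow> 'v list \<Rightarrow> 'v" where
  "ev n g r as = (if r \<in> idx n then g r as else 0)"

definition ev_star :: "nat \<Rightarrow> (nat \<Rightarrow> 'v list \<Rightarrow> 'v::comm_monoid_add) \<Rightarrow> 'v list \<Rightarrow> 'v" where
  "ev_star n g as = (\<Sum>j\<in>idx n. g j as)"

text \<open>Partial composition f \<circ>_i g for f in O(m), g in O(n), evaluated at [r] on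
  homogeneous as of degrees ds (length m+n-1).\<close>
definition pcomp :: "('k::field \<Rightarrow> 'v::ab_group_add \<Rightarrow> 'v) \<Rightarrow> nat \<Rightarrow> (nat \<Rightarrow> 'v list \<Rightarrow> 'v)
    \<Rightarrow> nat \<Rightarrow> (nat \<Rightarrow> 'v list \<Rightarrow> 'v) \<Rightarrow> nat \<Rightarrow> nat \<Rightarrow> int list \<Rightarrow> 'v list \<Rightarrow> 'v" where
  "pcomp scale m f n g i r ds as =
    (let pre = take (i - 1) as; mid = take n (drop (i - 1) as); post = drop (i - 1 + n) as;
         gs = ev_star n g mid;
         eps = sgn1 (int n * sum_list (take (i - 1) ds))
     in scale eps
       (if 1 \<le> r \<and> r \<le> i - 1 then ev m f r (pre @ [gs] @ post)
        else if i \<le> r \<and> r \<le> i + n - 1 then ev m f i (pre @ [ev n g (r - i + 1) mid] @ post)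
        else if i + n \<le> r \<and> r \<le> m + n - 1 then ev m f (r - n + 1) (pre @ [gs] @ post)
        else if r = m + n then ev m f i (pre @ [ev n g (n + 1) mid] @ post)
                              + ev m f (m + 1) (pre @ [gs] @ post)
        else 0))"

definition NS_infinity :: "('k::field_char_0 \<Rightarrow> 'v::ab_group_add \<Rightarrow> 'v) \<Rightarrow> (int \<Rightarrow> 'v set)
    \<Rightarrow> (nat \<Rightarrow> nat \<Rightarrow> 'v list \<Rightarrow> 'v) \<Rightarrow> bool" where
  "NS_infinity scale G eta \<longleftrightarrow>
     graded_vs scale G \<and>
     (\<forall>n\<ge>1. \<forall>r\<in>idx n. multilinear scale n (eta n r) \<and> has_degree G n (int n - 2) (eta n r)) \<and>
     (\<forall>k\<ge>1. \<forall>r\<in>idx k. \<forall>ds as. homog G k ds as \<longrightarrow>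
        (\<Sum>m\<in>{1..k}. let n = k + 1 - m in \<Sum>i\<in>{1..m}.
           scale (sgn1 (int i * (int n + 1))) (pcomp scale m (eta m) n (eta n) i r ds as)) = 0)"

definition eta_N :: "('k::field \<Rightarrow> 'v::ab_group_add \<Rightarrow> 'v) \<Rightarrow> (nat \<Rightarrow> 'v list \<Rightarrow> 'v) \<Rightarrow> ('v \<Rightarrow> 'v)
    \<Rightarrow> nat \<Rightarrow> nat \<Rightarrow> 'v list \<Rightarrow> 'v" where
  "eta_N scale mu N n r as =
    (if 1 \<le> r \<and> r \<le> n then muS mu N n {r} as
     else if 2 \<le> n \<and> r = n + 1 then
       (\<Sum>k\<in>{2..n}. scale ((-1) ^ (k - 1))
          ((N ^^ (k - 1)) (\<Sum>S\<in>{S. S \<subseteq> {1..n} \<and> card S = k}. muS mu N n S as)))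
     else 0)"

definition mu_N :: "('k::field \<Rightarrow> 'v::ab_group_add \<Rightarrow> 'v) \<Rightarrow> (nat \<Rightarrow> 'v list \<Rightarrow> 'v) \<Rightarrow> ('v \<Rightarrow> 'v)
    \<Rightarrow> nat \<Rightarrow> 'v list \<Rightarrow> 'v" where
  "mu_N scale mu N n as =
    (if n = 1 then mu 1 as
     else (\<Sum>k\<in>{1..n}. scale ((-1) ^ (k - 1))
          ((N ^^ (k - 1)) (\<Sum>S\<in>{S. S \<subseteq> {1..n} \<and> card S = k}. muS mu N n S as))))"

end

theory Submission
  imports Defs
begin

definition BL :: "nat \<Rightarrow> bool list set" where
  "BL n = {bs. length bs = n}"

definition cnt :: "bool list \<Rightarrow> nat" where
  "cnt bs = length (filter id bs)"

lemma finite_BL[simp]: "finite (BL n)"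
proof -
  have "BL n = {xs. set xs \<subseteq> UNIV \<and> length xs = n}" by (auto simp: BL_def)
  thus ?thesis using finite_lists_length_eq[of "UNIV::bool set" n] by simp
qed

lemma cnt_simps[simp]: "cnt [] = 0" "cnt (b # bs) = (if b then Suc (cnt bs) else cnt bs)"
  "cnt (xs @ ys) = cnt xs + cnt ys" "cnt (replicate n False) = 0"
  by (auto simp: cnt_def)

lemma cnt_pos: "True \<in> set bs \<Longrightarrow> cnt bs \<ge> 1"
  by (induct bs) auto

lemma BL_append_sum:
  "(\<Sum>bs\<in>BL (p + q). f bs) = (\<Sum>b1\<in>BL p. \<Sum>b2\<in>BL q. f (b1 @ b2))"
proof -
  have "(\<Sum>bs\<in>BL (p + q). f bs) = (\<Sum>x\<in>BL p \<times> BL q. f (fst x @ snd x))"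
  proof (rule sum.reindex_bij_witness[where i="\<lambda>x. fst x @ snd x" and j="\<lambda>bs. (take p bs, drop p bs)"])
  qed (auto simp: BL_def)
  also have "\<dots> = (\<Sum>b1\<in>BL p. \<Sum>b2\<in>BL q. f (b1 @ b2))"
    by (simp add: sum.cartesian_product split_def)
  finally show ?thesis .
qed

lemma BL_Suc_sum:
  "(\<Sum>bs\<in>BL (Suc q). f bs) = (\<Sum>b2\<in>BL q. f (True # b2) + f (False # b2))"
proof -
  have "(\<Sum>bs\<in>BL (Suc q). f bs) = (\<Sum>x\<in>UNIV \<times> BL q. f (fst x # snd x))"
  proof (rule sum.reindex_bij_witness[where i="\<lambda>x. fst x # snd x" and j="\<lambda>bs. (hd bs, tl bs)"])
  qed (auto simp: BL_def length_Suc_conv)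
  also have "\<dots> = (\<Sum>b2\<in>BL q. \<Sum>b\<in>UNIV. f (b # b2))"
    by (subst sum.swap) (simp add: sum.cartesian_product split_def)
  also have "\<dots> = (\<Sum>b2\<in>BL q. f (True # b2) + f (False # b2))"
    by (simp add: UNIV_bool add.commute)
  finally show ?thesis .
qed

lemma BL_split_sum:
  "(\<Sum>bs\<in>BL n. f bs) = f (replicate n False) + (\<Sum>bs\<in>BL n. if True \<in> set bs then f bs else 0)"
proof -
  have r: "replicate n False \<in> BL n" by (simp add: BL_def)
  have "(\<Sum>bs\<in>BL n. f bs) = f (replicate n False) + (\<Sum>bs\<in>BL n - {replicate n False}. f bs)"
    using r by (simp add: sum.remove)
  also have "(\<Sum>bs\<in>BL n - {replicate n False}. f bs) = (\<Sum>bs\<in>BL n. if True \<in> set bs then f bs else 0)"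
  proof -
    have "\<And>bs. bs \<in> BL n \<Longrightarrow> (True \<in> set bs) = (bs \<noteq> replicate n False)"
      by (auto simp: BL_def replicate_length_same[symmetric] in_set_conv_nth  list_eq_iff_nth_eq)
    then show ?thesis
      by (simp add: sum.If_cases Int_def set_diff_eq)
  qed
  finally show ?thesis .
qed


locale nsx = vector_space scale
  for scale :: "'k::field_char_0 \<Rightarrow> 'v::ab_group_add \<Rightarrow> 'v" +
  fixes G :: "int \<Rightarrow> 'v set" and mu :: "nat \<Rightarrow> 'v list \<Rightarrow> 'v" and N :: "'v \<Rightarrow> 'v"
  assumes Nadd: "N (x + y) = N x + N y"
    and Nscale: "N (scale c x) = scale c (N x)"
    and NG: "x \<in> G d \<Longrightarrow> N x \<in> G d"
    and SUB: "subspace (G d)"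
    and MLT: "n \<ge> 1 \<Longrightarrow> multilinear scale n (mu n)"
    and DG: "n \<ge> 1 \<Longrightarrow> has_degree G n (int n - 2) (mu n)"
    and NIJ: "n \<ge> 1 \<Longrightarrow> homog G n ds as \<Longrightarrow> mu n (map N as) =
        (\<Sum>k\<in>{1..n}. scale ((-1) ^ (k - 1))
           ((N ^^ k) (\<Sum>S\<in>{S. S \<subseteq> {1..n} \<and> card S = k}. muS mu N n S as)))"
    and AI: "k \<ge> 1 \<Longrightarrow> homog G k ds as \<Longrightarrow>
        (\<Sum>m\<in>{1..k}. let n = k + 1 - m in \<Sum>i\<in>{1..m}.
           scale (sgn1 (int i * (int n + 1) + int n * sum_list (take (i - 1) ds)))
             (mu m (take (i - 1) as @ [mu n (take n (drop (i - 1) as))] @ drop (i - 1 + n) as))) = 0"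
begin

definition nm :: "bool list \<Rightarrow> 'v list \<Rightarrow> 'v list" where
  "nm bs w = map (\<lambda>(b, a). if b then a else N a) (zip bs w)"

definition T :: "nat \<Rightarrow> 'v list \<Rightarrow> 'v" where
  "T n w = (\<Sum>bs\<in>BL n. if True \<in> set bs then scale ((-1) ^ (cnt bs - 1)) ((N ^^ (cnt bs - 1)) (mu n (nm bs w))) else 0)"

definition hom :: "'v \<Rightarrow> bool" where
  "hom x \<longleftrightarrow> (\<exists>d. x \<in> G d)"

lemma nm_simps[simp]: "nm [] w = []" "nm bs [] = []"
  "nm (b # bs) (x # xs) = (if b then x else N x) # nm bs xs"
  "length (nm bs w) = min (length bs) (length w)"
  by (auto simp: nm_def)

lemma nm_append[simp]: "length b1 = length w1 \<Longrightarrow> nm (b1 @ b2) (w1 @ w2) = nm b1 w1 @ nm b2 w2"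
  by (simp add: nm_def)

lemma nm_replicate: "length w = n \<Longrightarrow> nm (replicate n False) w = map N w"
  by (induct w arbitrary: n) auto

lemma N0[simp]: "N 0 = 0"
  using Nadd[of 0 0] by simp

lemma Npow_add: "(N ^^ j) (x + y) = (N ^^ j) x + (N ^^ j) y"
  by (induct j) (auto simp: Nadd)

lemma Npow_scale: "(N ^^ j) (scale c x) = scale c ((N ^^ j) x)"
  by (induct j) (auto simp: Nscale)

lemma Npow0[simp]: "(N ^^ j) 0 = 0"
  by (induct j) auto

lemma Npow_sum: "(N ^^ j) (sum f A) = (\<Sum>a\<in>A. (N ^^ j) (f a))"
  by (induct A rule: infinite_finite_induct) (auto simp: Npow_add)

lemma N_sum: "N (sum f A) = (\<Sum>a\<in>A. N (f a))"
  using Npow_sum[of 1] by simp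

lemma Npow_N: "(N ^^ j) (N x) = (N ^^ Suc j) x"
  by (simp add: funpow_Suc_right del: funpow.simps)

lemma hom_N: "hom x \<Longrightarrow> hom (N x)"
  using NG by (auto simp: hom_def)

lemma hom_Npow: "hom x \<Longrightarrow> hom ((N ^^ j) x)"
  by (induct j) (auto simp: hom_N)

lemma hom_nm: "\<forall>x\<in>set w. hom x \<Longrightarrow> \<forall>x\<in>set (nm bs w). hom x"
  by (auto simp: nm_def hom_N dest: set_zip_rightD)

lemma homog_ex: "\<forall>x\<in>set w. hom x \<Longrightarrow> homog G (length w) (map (\<lambda>x. SOME d. x \<in> G d) w) w"
  unfolding homog_def hom_def by (auto intro: someI_ex)

lemma homog_hom: "homog G n ds w \<Longrightarrow> \<forall>x\<in>set w. hom x"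
  unfolding homog_def hom_def by (fastforce simp: in_set_conv_nth)

lemma homog_nm: "homog G n ds w \<Longrightarrow> length bs = n \<Longrightarrow> homog G n ds (nm bs w)"
  unfolding homog_def nm_def by (auto simp: NG)

lemma mu_hom: "n \<ge> 1 \<Longrightarrow> length w = n \<Longrightarrow> \<forall>x\<in>set w. hom x \<Longrightarrow> hom (mu n w)"
  using DG[of n] homog_ex[of w] unfolding has_degree_def hom_def by blast

lemma slot_add: assumes "length A + 1 + length B = m" shows "
mu m (A @ (x + y) # B) = mu m (A @ x # B) + mu m (A @ y # B)"
proof -
  have "m \<ge> 1" "length (A @ x # B) = m" "length A < m" using assms by auto
  then show ?thesis using MLT[of m] unfolding multilinear_def
    by (metis list_update_length)
qed

lemma slot_scale: assumes "length A + 1 + length B = m" shows "mu m (A @ scale c x # B) = scale c (mu m (A @ x # B))"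
proof -
  have "m \<ge> 1" "length (A @ x # B) = m" "length A < m" using assms by auto
  then show ?thesis using MLT[of m] unfolding multilinear_def
    by (metis list_update_length)
qed

lemma slot_zero: "length A + 1 + length B = m \<Longrightarrow> mu m (A @ 0 # B) = 0"
  using slot_add[of A B m 0 0] by simp

lemma slot_sum: "length A + 1 + length B = m \<Longrightarrow>
   mu m (A @ sum f S # B) = (\<Sum>s\<in>S. mu m (A @ f s # B))"
  by (induct S rule: infinite_finite_induct) (auto simp: slot_zero slot_add)


definition bset :: "bool list \<Rightarrow> nat set" where
  "bset bs = {j. 1 \<le> j \<and> j \<le> length bs \<and> bs ! (j - 1)}"

lemma muS_bset: "length bs = n \<Longrightarrow> length w = n \<Longrightarrow> muS mu N n (bset bs) w = mu n (nm bs w)"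
  unfolding muS_def
  by (rule arg_cong[where f="mu n"], rule nth_equalityI) (auto simp: bset_def nm_def nth_upt simp del: upt_Suc)

lemma card_bset: "card (bset bs) = cnt bs"
proof -
  have "bset bs = Suc ` {i. i < length bs \<and> bs ! i}"
    by (auto simp: bset_def image_iff) (metis One_nat_def Suc_pred le_less_Suc_eq less_eq_Suc_le not_less_eq_eq)
  then show ?thesis
    by (simp add: card_image cnt_def length_filter_conv_card)
qed

lemma CONV:
  assumes len: "length w = n"
    and phi_add: "\<And>k x y. phi k (x + y) = phi k x + phi k y"
    and phi_0: "\<And>k. phi k 0 = 0"
  shows "(\<Sum>k\<in>{1..n}. phi k (\<Sum>S\<in>{S. S \<subseteq> {1..n} \<and> card S = k}. muS mu N n S w))
       = (\<Sum>bs\<in>BL n. if True \<in> set bs then phi (cnt bs) (mu n (nm bs w)) else 0)"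
proof -
  let ?A = "{S. S \<subseteq> {1..n} \<and> S \<noteq> {}}"
  have phi: "phi k (sum f B) = (\<Sum>a\<in>B. phi k (f a))" for k and f :: "nat set \<Rightarrow> 'v" and B
    by (induct B rule: infinite_finite_induct) (auto simp: phi_add phi_0)
  have "(\<Sum>k\<in>{1..n}. phi k (\<Sum>S\<in>{S. S \<subseteq> {1..n} \<and> card S = k}. muS mu N n S w))
      = (\<Sum>k\<in>{1..n}. \<Sum>S\<in>{S. S \<in> ?A \<and> card S = k}. phi (card S) (muS mu N n S w))"
  proof (rule sum.cong[OF refl])
    fix k assume k: "k \<in> {1..n}"
    have e: "{S. S \<subseteq> {1..n} \<and> card S = k} = {S. S \<in> ?A \<and> card S = k}"
      using k by auto
    have "phi k (\<Sum>S\<in>{S. S \<subseteq> {1..n} \<and> card S = k}. muS mu N n S w)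
      = (\<Sum>S\<in>{S. S \<subseteq> {1..n} \<and> card S = k}. phi k (muS mu N n S w))"
      by (rule phi)
    also have "\<dots> = (\<Sum>S\<in>{S. S \<in> ?A \<and> card S = k}. phi (card S) (muS mu N n S w))"
      unfolding e by (rule sum.cong) auto
    finally show "phi k (\<Sum>S\<in>{S. S \<subseteq> {1..n} \<and> card S = k}. muS mu N n S w)
      = (\<Sum>S\<in>{S. S \<in> ?A \<and> card S = k}. phi (card S) (muS mu N n S w))" .
  qed
  also have "\<dots> = (\<Sum>S\<in>?A. phi (card S) (muS mu N n S w))"
  proof (rule sum.group)
    show "finite ?A" by (rule finite_subset[of _ "Pow {1..n}"]) auto
    show "card ` ?A \<subseteq> {1..n}"
    proof
      fix k assume "k \<in> card ` ?A"
      then obtain S where S: "S \<subseteq> {1..n}" "S \<noteq> {}" "k = card S" by auto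
      have "finite S" using S(1) finite_subset by blast
      hence "card S \<ge> 1" using S(2) by (simp add: Suc_le_eq card_gt_0_iff)
      moreover have "card S \<le> n" using card_mono[OF _ S(1)] by simp
      ultimately show "k \<in> {1..n}" using S(3) by simp
    qed
  qed simp
  also have "\<dots> = (\<Sum>bs\<in>{bs\<in>BL n. True \<in> set bs}. phi (cnt bs) (mu n (nm bs w)))"
  proof (rule sum.reindex_bij_witness[where i="bset" and j="\<lambda>S. map (\<lambda>j. j \<in> S) [1..<n+1]"])
    fix bs assume "bs \<in> {bs\<in>BL n. True \<in> set bs}"
    then have bs: "length bs = n" "True \<in> set bs" by (auto simp: BL_def)
    show "map (\<lambda>j. j \<in> bset bs) [1..<n + 1] = bs"
      using bs by (intro nth_equalityI) (auto simp: bset_def nth_upt simp del: upt_Suc)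
    show "bset bs \<in> ?A"
    proof -
      obtain i where "i < length bs" "bs ! i" using bs(2) by (auto simp: in_set_conv_nth)
      hence "Suc i \<in> bset bs" by (simp add: bset_def)
      thus ?thesis using bs by (auto simp: bset_def)
    qed
  next
    fix S assume S: "S \<in> ?A"
    let ?b = "map (\<lambda>j. j \<in> S) [1..<n + 1]"
    have nb: "\<And>j. j < n \<Longrightarrow> ?b ! j = (Suc j \<in> S)"
      by (simp add: nth_upt del: upt_Suc)
    have lb: "length ?b = n" by simp
    have Ssub: "S \<subseteq> {1..n}" "S \<noteq> {}" using S by auto
    have bS: "bset ?b = S"
    proof (intro set_eqI iffI)
      fix x assume "x \<in> bset ?b"
      then have "1 \<le> x" "x \<le> n" "?b ! (x - 1)" unfolding bset_def lb by auto
      then show "x \<in> S" using nb[of "x - 1"] by simp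
    next
      fix x assume x: "x \<in> S"
      then have "1 \<le> x" "x \<le> n" using Ssub by auto
      then show "x \<in> bset ?b" unfolding bset_def lb using nb[of "x - 1"] x by simp
    qed
    have tb: "True \<in> set ?b"
    proof -
      obtain x where x: "x \<in> S" using Ssub by auto
      then have "1 \<le> x" "x \<le> n" using Ssub by auto
      then have e1: "?b ! (x - 1) = True" using nb[of "x - 1"] x by simp
      have "x - 1 < length ?b" using \<open>1 \<le> x\<close> \<open>x \<le> n\<close> lb by linarith
      then have "?b ! (x - 1) \<in> set ?b" by (rule nth_mem)
      then show ?thesis unfolding e1 .
    qed
    show "bset ?b = S" by (rule bS)
    show "?b \<in> {bs \<in> BL n. True \<in> set bs}"
      unfolding BL_def using tb lb by blast
    show "phi (cnt ?b) (mu n (nm ?b w)) = phi (card S) (muS mu N n S w)"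
      using muS_bset[of ?b n w] card_bset[of ?b] bS len by simp
  qed
  also have "\<dots> = (\<Sum>bs\<in>BL n. if True \<in> set bs then phi (cnt bs) (mu n (nm bs w)) else 0)"
    by (simp add: sum.inter_filter)
  finally show ?thesis .
qed


lemma NIJ':
  assumes n: "n \<ge> 1" and len: "length w = n" and h: "\<forall>x\<in>set w. hom x"
  shows "mu n (map N w) = (\<Sum>bs\<in>BL n. if True \<in> set bs then
            scale ((-1) ^ (cnt bs - 1)) ((N ^^ cnt bs) (mu n (nm bs w))) else 0)"
proof -
  have "mu n (map N w) = (\<Sum>k\<in>{1..n}. scale ((-1) ^ (k - 1))
           ((N ^^ k) (\<Sum>S\<in>{S. S \<subseteq> {1..n} \<and> card S = k}. muS mu N n S w)))"
    using NIJ[OF n] homog_ex[OF h] len by simp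
  also have "\<dots> = (\<Sum>bs\<in>BL n. if True \<in> set bs then
            scale ((-1) ^ (cnt bs - 1)) ((N ^^ cnt bs) (mu n (nm bs w))) else 0)"
    by (rule CONV[OF len, where phi="\<lambda>k x. scale ((-1) ^ (k - 1)) ((N ^^ k) x)"])
       (simp_all add: Npow_add scale_right_distrib)
  finally show ?thesis .
qed

lemma neg_pow: "c \<ge> 1 \<Longrightarrow> scale ((-1) ^ c) x = - scale ((-1) ^ (c - 1)) x"
proof -
  assume "c \<ge> 1"
  then obtain d where "c = Suc d" by (cases c) auto
  then show ?thesis by simp
qed

lemma star:
  assumes n: "n \<ge> 1" and len: "length w = n" and h: "\<forall>x\<in>set w. hom x"
  shows "(\<Sum>bs\<in>BL n. scale ((-1) ^ cnt bs) ((N ^^ cnt bs) (mu n (nm bs w)))) = 0"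
proof -
  have "(\<Sum>bs\<in>BL n. scale ((-1) ^ cnt bs) ((N ^^ cnt bs) (mu n (nm bs w))))
     = mu n (map N w) + (\<Sum>bs\<in>BL n. if True \<in> set bs then
           scale ((-1) ^ cnt bs) ((N ^^ cnt bs) (mu n (nm bs w))) else 0)"
    by (subst BL_split_sum) (simp add: nm_replicate len)
  also have "(\<Sum>bs\<in>BL n. if True \<in> set bs then
           scale ((-1) ^ cnt bs) ((N ^^ cnt bs) (mu n (nm bs w))) else 0)
     = - (\<Sum>bs\<in>BL n. if True \<in> set bs then
            scale ((-1) ^ (cnt bs - 1)) ((N ^^ cnt bs) (mu n (nm bs w))) else 0)"
    by (subst sum_negf[symmetric], rule sum.cong) (auto, metis One_nat_def cnt_pos neg_pow)
  finally show ?thesis using NIJ'[OF n len h] by simp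
qed

lemma NT:
  assumes n: "n \<ge> 1" and len: "length w = n" and h: "\<forall>x\<in>set w. hom x"
  shows "N (T n w) = mu n (map N w)"
proof -
  have "N (T n w) = (\<Sum>bs\<in>BL n. if True \<in> set bs then
            scale ((-1) ^ (cnt bs - 1)) ((N ^^ cnt bs) (mu n (nm bs w))) else 0)"
    unfolding T_def N_sum
  proof (rule sum.cong[OF refl])
    fix bs assume "bs \<in> BL n"
    show "N (if True \<in> set bs then scale ((-1) ^ (cnt bs - 1)) ((N ^^ (cnt bs - 1)) (mu n (nm bs w))) else 0) =
         (if True \<in> set bs then scale ((-1) ^ (cnt bs - 1)) ((N ^^ cnt bs) (mu n (nm bs w))) else 0)"
    proof (cases "True \<in> set bs")
      case True
      then obtain d where d: "cnt bs = Suc d" using cnt_pos[of bs] by (cases "cnt bs") auto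
      show ?thesis using True by (simp add: d Nscale)
    qed simp
  qed
  then show ?thesis using NIJ'[OF n len h] by simp
qed


definition tmL :: "'v list \<Rightarrow> 'v list \<Rightarrow> bool list \<Rightarrow> bool list \<Rightarrow> 'v \<Rightarrow> 'v" where
  "tmL pre post b1 b2 Y = scale ((-1) ^ (cnt b1 + cnt b2)) ((N ^^ (cnt b1 + cnt b2))
      (mu (length pre + 1 + length post) (nm b1 pre @ Y # nm b2 post)))"

definition Lf :: "'v list \<Rightarrow> 'v list \<Rightarrow> 'v \<Rightarrow> 'v" where
  "Lf pre post Y = (\<Sum>b1\<in>BL (length pre). \<Sum>b2\<in>BL (length post). tmL pre post b1 b2 Y)"

lemma tmL_add: "b1 \<in> BL (length pre) \<Longrightarrow> b2 \<in> BL (length post) \<Longrightarrow>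
  tmL pre post b1 b2 (Y + Z) = tmL pre post b1 b2 Y + tmL pre post b1 b2 Z"
  unfolding tmL_def by (subst slot_add) (auto simp: BL_def Npow_add scale_right_distrib)

lemma tmL_scale: "b1 \<in> BL (length pre) \<Longrightarrow> b2 \<in> BL (length post) \<Longrightarrow>
  tmL pre post b1 b2 (scale c Y) = scale c (tmL pre post b1 b2 Y)"
  unfolding tmL_def by (subst slot_scale) (auto simp: BL_def Npow_scale scale_left_commute)

lemma tmL_zero: "b1 \<in> BL (length pre) \<Longrightarrow> b2 \<in> BL (length post) \<Longrightarrow>
  tmL pre post b1 b2 0 = 0"
  unfolding tmL_def by (subst slot_zero) (auto simp: BL_def)

lemma Lf_add: "Lf pre post (Y + Z) = Lf pre post Y + Lf pre post Z"
  unfolding Lf_def by (simp add: tmL_add sum.distrib cong: sum.cong)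

lemma Lf_zero: "Lf pre post 0 = 0"
  unfolding Lf_def by (simp add: tmL_zero cong: sum.cong)

lemma Lf_scale: "Lf pre post (scale c Y) = scale c (Lf pre post Y)"
  unfolding Lf_def by (simp add: tmL_scale scale_sum_right cong: sum.cong)

lemma Lf_sum: "Lf pre post (sum f A) = (\<Sum>a\<in>A. Lf pre post (f a))"
  by (induct A rule: infinite_finite_induct) (auto simp: Lf_zero Lf_add)

lemma Lf_N:
  assumes hY: "hom Y" and hp: "\<forall>x\<in>set pre. hom x" and hq: "\<forall>x\<in>set post. hom x"
  shows "Lf pre post (N Y) = N (Lf pre post Y)"
proof -
  let ?p = "length pre" and ?q = "length post"
  let ?m = "?p + 1 + ?q"
  let ?w = "pre @ Y # post"
  define Fb where "Fb bs = scale ((-1) ^ cnt bs) ((N ^^ cnt bs) (mu ?m (nm bs ?w)))" for bs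
  have "0 = (\<Sum>bs\<in>BL ?m. Fb bs)"
    unfolding Fb_def using star[of ?m ?w] hY hp hq by auto
  also have "\<dots> = (\<Sum>b1\<in>BL ?p. \<Sum>b2\<in>BL ?q. Fb (b1 @ True # b2) + Fb (b1 @ False # b2))"
    unfolding Fb_def[symmetric]
  proof -
    have e: "?m = ?p + Suc ?q" by simp
    show ?thesis by (simp only: e BL_append_sum BL_Suc_sum)
  qed
  also have "\<dots> = (\<Sum>b1\<in>BL ?p. \<Sum>b2\<in>BL ?q. - N (tmL pre post b1 b2 Y) + tmL pre post b1 b2 (N Y))"
  proof (intro sum.cong refl)
    fix b1 b2 assume b1: "b1 \<in> BL ?p" and b2: "b2 \<in> BL ?q"
    have l: "length b1 = ?p" using b1 by (simp add: BL_def)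
    show "Fb (b1 @ True # b2) + Fb (b1 @ False # b2) = - N (tmL pre post b1 b2 Y) + tmL pre post b1 b2 (N Y)"
      unfolding Fb_def tmL_def using l by (simp add: Nscale Npow_N)
  qed
  also have "\<dots> = - N (Lf pre post Y) + Lf pre post (N Y)"
    unfolding Lf_def by (simp add: sum.distrib N_sum sum_negf sum_subtractf)
  finally show ?thesis by (simp add: eq_neg_iff_add_eq_0 add.commute)
qed

lemma Lf_Npow:
  assumes hY: "hom Y" and hp: "\<forall>x\<in>set pre. hom x" and hq: "\<forall>x\<in>set post. hom x"
  shows "Lf pre post ((N ^^ j) Y) = (N ^^ j) (Lf pre post Y)"
proof (induct j)
  case (Suc j)
  have "Lf pre post ((N ^^ Suc j) Y) = Lf pre post (N ((N ^^ j) Y))" by simp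
  also have "\<dots> = N (Lf pre post ((N ^^ j) Y))" by (rule Lf_N[OF hom_Npow[OF hY] hp hq])
  finally show ?case using Suc by simp
qed simp


lemma comb_pow: "cu \<ge> 1 \<Longrightarrow> scale ((-1) ^ (cu - 1)) ((N ^^ (cu - 1)) (scale ((-1) ^ a) ((N ^^ a) Z)))
   = scale ((-1) ^ (a + cu - 1)) ((N ^^ (a + cu - 1)) Z)"
proof -
  assume "cu \<ge> 1"
  then have e: "a + cu - 1 = (cu - 1) + a" by simp
  show ?thesis unfolding e
    by (simp add: Npow_scale power_add funpow_add)
qed

definition Dt :: "'v list \<Rightarrow> 'v list \<Rightarrow> 'v list \<Rightarrow> bool list \<Rightarrow> bool list \<Rightarrow> bool list \<Rightarrow> 'v" where
  "Dt pre mid post b1 u b2 = (if True \<in> set (b1 @ u @ b2) then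
     scale ((-1) ^ (cnt (b1 @ u @ b2) - 1)) ((N ^^ (cnt (b1 @ u @ b2) - 1))
       (mu (length pre + 1 + length post) (nm b1 pre @ mu (length mid) (nm u mid) # nm b2 post))) else 0)"

lemma dagger:
  assumes n: "n \<ge> 1" and lm: "length mid = n"
    and hp: "\<forall>x\<in>set pre. hom x" and hm: "\<forall>x\<in>set mid. hom x" and hq: "\<forall>x\<in>set post. hom x"
  shows "T (length pre + 1 + length post) (pre @ T n mid # post) =
   (\<Sum>b1\<in>BL (length pre). \<Sum>u\<in>BL n. \<Sum>b2\<in>BL (length post). Dt pre mid post b1 u b2)"
proof -
  let ?p = "length pre" and ?q = "length post"
  let ?m = "?p + 1 + ?q"
  let ?X = "T n mid"
  let ?w = "pre @ ?X # post"
  define tT where "tT bs = (if True \<in> set bs then scale ((-1) ^ (cnt bs - 1)) ((N ^^ (cnt bs - 1)) (mu ?m (nm bs ?w))) else 0)" for bs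
  define E where "E b1 b2 = (if True \<in> set b1 \<or> True \<in> set b2 then scale ((-1) ^ (cnt b1 + cnt b2 - 1))
      ((N ^^ (cnt b1 + cnt b2 - 1)) (mu ?m (nm b1 pre @ mu n (map N mid) # nm b2 post))) else 0)" for b1 b2
  have NX: "N ?X = mu n (map N mid)" by (rule NT[OF n lm hm])
  have "T ?m ?w = (\<Sum>bs\<in>BL ?m. tT bs)" unfolding T_def tT_def ..
  also have "\<dots> = (\<Sum>b1\<in>BL ?p. \<Sum>b2\<in>BL ?q. tT (b1 @ True # b2) + tT (b1 @ False # b2))"
  proof -
    have e: "?m = ?p + Suc ?q" by simp
    show ?thesis by (simp only: e BL_append_sum BL_Suc_sum)
  qed
  also have "\<dots> = (\<Sum>b1\<in>BL ?p. \<Sum>b2\<in>BL ?q. tmL pre post b1 b2 ?X + E b1 b2)"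
  proof (intro sum.cong refl)
    fix b1 b2 assume b1: "b1 \<in> BL ?p" and b2: "b2 \<in> BL ?q"
    have l: "length b1 = ?p" using b1 by (simp add: BL_def)
    show "tT (b1 @ True # b2) + tT (b1 @ False # b2) = tmL pre post b1 b2 ?X + E b1 b2"
      unfolding tT_def tmL_def E_def using l by (simp add: NX)
  qed
  also have "\<dots> = Lf pre post ?X + (\<Sum>b1\<in>BL ?p. \<Sum>b2\<in>BL ?q. E b1 b2)"
    unfolding Lf_def by (simp add: sum.distrib)
  also have "Lf pre post ?X = (\<Sum>b1\<in>BL ?p. \<Sum>b2\<in>BL ?q. \<Sum>u\<in>BL n.
       if True \<in> set u then Dt pre mid post b1 u b2 else 0)"
  proof -
    have "Lf pre post ?X = (\<Sum>u\<in>BL n. Lf pre post (if True \<in> set u then scale ((-1) ^ (cnt u - 1))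
        ((N ^^ (cnt u - 1)) (mu n (nm u mid))) else 0))"
      unfolding T_def by (rule Lf_sum)
    also have "\<dots> = (\<Sum>u\<in>BL n. \<Sum>b1\<in>BL ?p. \<Sum>b2\<in>BL ?q.
       if True \<in> set u then Dt pre mid post b1 u b2 else 0)"
    proof (rule sum.cong[OF refl])
      fix u assume u: "u \<in> BL n"
      have lu: "length u = n" using u by (simp add: BL_def)
      show "Lf pre post (if True \<in> set u then scale ((-1) ^ (cnt u - 1))
        ((N ^^ (cnt u - 1)) (mu n (nm u mid))) else 0) = (\<Sum>b1\<in>BL ?p. \<Sum>b2\<in>BL ?q.
       if True \<in> set u then Dt pre mid post b1 u b2 else 0)"
      proof (cases "True \<in> set u")
        case False
        then show ?thesis by (simp add: Lf_zero)
      next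
        case True
        have cu: "cnt u \<ge> 1" using cnt_pos[OF True] .
        have hmu: "hom (mu n (nm u mid))"
          by (rule mu_hom[OF n]) (simp_all add: lu lm hom_nm[OF hm])
        have "Lf pre post (scale ((-1) ^ (cnt u - 1)) ((N ^^ (cnt u - 1)) (mu n (nm u mid))))
          = scale ((-1) ^ (cnt u - 1)) ((N ^^ (cnt u - 1)) (Lf pre post (mu n (nm u mid))))"
          by (simp add: Lf_scale Lf_Npow[OF hmu hp hq])
        also have "\<dots> = (\<Sum>b1\<in>BL ?p. \<Sum>b2\<in>BL ?q. Dt pre mid post b1 u b2)"
          unfolding Lf_def Npow_sum scale_sum_right
        proof (intro sum.cong refl)
          fix b1 b2 assume "b1 \<in> BL ?p" "b2 \<in> BL ?q"
          show "scale ((-1) ^ (cnt u - 1)) ((N ^^ (cnt u - 1)) (tmL pre post b1 b2 (mu n (nm u mid))))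
             = Dt pre mid post b1 u b2"
            unfolding tmL_def Dt_def comb_pow[OF cu] using True lm
            by (simp add: ac_simps)
        qed
        finally show ?thesis using True by simp
      qed
    qed
    also have "\<dots> = (\<Sum>b1\<in>BL ?p. \<Sum>b2\<in>BL ?q. \<Sum>u\<in>BL n.
       if True \<in> set u then Dt pre mid post b1 u b2 else 0)"
      by (subst sum.swap) (subst (2) sum.swap, rule refl)
    finally show ?thesis .
  qed
  also have "(\<Sum>b1\<in>BL ?p. \<Sum>b2\<in>BL ?q. \<Sum>u\<in>BL n.
       if True \<in> set u then Dt pre mid post b1 u b2 else 0) + (\<Sum>b1\<in>BL ?p. \<Sum>b2\<in>BL ?q. E b1 b2)
     = (\<Sum>b1\<in>BL ?p. \<Sum>b2\<in>BL ?q. \<Sum>u\<in>BL n. Dt pre mid post b1 u b2)"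
  proof -
    have "(\<Sum>u\<in>BL n. Dt pre mid post b1 u b2) = E b1 b2 + (\<Sum>u\<in>BL n.
       if True \<in> set u then Dt pre mid post b1 u b2 else 0)" for b1 b2
      by (subst BL_split_sum) (simp add: Dt_def E_def nm_replicate lm set_replicate_conv_if)
    then show ?thesis by (simp add: sum.distrib add.commute)
  qed
  also have "\<dots> = (\<Sum>b1\<in>BL ?p. \<Sum>u\<in>BL n. \<Sum>b2\<in>BL ?q. Dt pre mid post b1 u b2)"
    by (rule sum.cong[OF refl]) (rule sum.swap)
  finally show ?thesis .
qed


definition Fk :: "nat \<Rightarrow> nat \<Rightarrow> nat \<Rightarrow> 'v list \<Rightarrow> bool list \<Rightarrow> 'v" where
  "Fk m n i as bs = (if True \<in> set bs then scale ((-1) ^ (cnt bs - 1)) ((N ^^ (cnt bs - 1))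
     (mu m (take (i - 1) (nm bs as) @ [mu n (take n (drop (i - 1) (nm bs as)))] @ drop (i - 1 + n) (nm bs as))))
     else 0)"

lemma dagger2:
  assumes k: "length as = k" and h: "\<forall>x\<in>set as. hom x"
    and m: "1 \<le> m" "m \<le> k" and i: "1 \<le> i" "i \<le> m" and n: "n = k + 1 - m"
  shows "T m (take (i - 1) as @ [T n (take n (drop (i - 1) as))] @ drop (i - 1 + n) as)
     = (\<Sum>bs\<in>BL k. Fk m n i as bs)"
proof -
  define pre where "pre = take (i - 1) as"
  define mid where "mid = take n (drop (i - 1) as)"
  define post where "post = drop (i - 1 + n) as"
  have lp: "length pre = i - 1" using k m i by (simp add: pre_def)
  have lm: "length mid = n" using k m i n by (simp add: mid_def)
  have lq: "length post = m - i" using k m i n by (simp add: post_def)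
  have asd: "as = pre @ mid @ post" unfolding pre_def mid_def post_def
    by (metis append_take_drop_id drop_drop add.commute)
  have hp: "\<forall>x\<in>set pre. hom x" and hm: "\<forall>x\<in>set mid. hom x" and hq: "\<forall>x\<in>set post. hom x"
    using h unfolding asd by auto
  have n1: "n \<ge> 1" using n m by simp
  have mm: "m = length pre + 1 + length post" using lp lq i by simp
  have "T m (take (i - 1) as @ [T n (take n (drop (i - 1) as))] @ drop (i - 1 + n) as)
      = T (length pre + 1 + length post) (pre @ T n mid # post)"
    unfolding pre_def [symmetric] mid_def[symmetric] post_def[symmetric] mm[symmetric] by simp
  also have "\<dots> = (\<Sum>b1\<in>BL (length pre). \<Sum>u\<in>BL n. \<Sum>b2\<in>BL (length post). Dt pre mid post b1 u b2)"
    by (rule dagger[OF n1 lm hp hm hq])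
  also have "\<dots> = (\<Sum>b1\<in>BL (length pre). \<Sum>u\<in>BL n. \<Sum>b2\<in>BL (length post). Fk m n i as (b1 @ u @ b2))"
  proof (intro sum.cong refl)
    fix b1 u b2 assume "b1 \<in> BL (length pre)" "u \<in> BL n" "b2 \<in> BL (length post)"
    then have l: "length b1 = length pre" "length u = length mid" "length b2 = length post"
      using lm by (auto simp: BL_def)
    have e: "nm (b1 @ u @ b2) as = nm b1 pre @ nm u mid @ nm b2 post"
      unfolding asd using l by simp
    show "Dt pre mid post b1 u b2 = Fk m n i as (b1 @ u @ b2)"
      unfolding Fk_def Dt_def e using l lp lm mm by simp
  qed
  also have "\<dots> = (\<Sum>bs\<in>BL k. Fk m n i as bs)"
  proof -
    have e: "k = length pre + (n + length post)" using k asd lm by simp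
    show ?thesis unfolding e BL_append_sum by simp
  qed
  finally show ?thesis .
qed

lemma AINF_T:
  assumes k: "k \<ge> 1" and hg: "homog G k ds as"
  shows "(\<Sum>m\<in>{1..k}. let n = k + 1 - m in \<Sum>i\<in>{1..m}.
           scale (sgn1 (int i * (int n + 1) + int n * sum_list (take (i - 1) ds)))
             (T m (take (i - 1) as @ [T n (take n (drop (i - 1) as))] @ drop (i - 1 + n) as))) = 0"
proof -
  have len: "length as = k" using hg by (simp add: homog_def)
  have h: "\<forall>x\<in>set as. hom x" by (rule homog_hom[OF hg])
  define sg where "sg m i = (sgn1 (int i * (int (k + 1 - m) + 1) + int (k + 1 - m) * sum_list (take (i - 1) ds)) :: 'k)" for m i
  have "(\<Sum>m\<in>{1..k}. let n = k + 1 - m in \<Sum>i\<in>{1..m}.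
           scale (sgn1 (int i * (int n + 1) + int n * sum_list (take (i - 1) ds)))
             (T m (take (i - 1) as @ [T n (take n (drop (i - 1) as))] @ drop (i - 1 + n) as)))
      = (\<Sum>m\<in>{1..k}. \<Sum>i\<in>{1..m}. scale (sg m i) (\<Sum>bs\<in>BL k. Fk m (k + 1 - m) i as bs))"
    unfolding Let_def sg_def
    by (intro sum.cong refl, subst dagger2[OF len h]) auto
  also have "\<dots> = (\<Sum>bs\<in>BL k. \<Sum>m\<in>{1..k}. \<Sum>i\<in>{1..m}. scale (sg m i) (Fk m (k + 1 - m) i as bs))"
    by (simp add: scale_sum_right sum.swap[of _ "BL k"])
  also have "\<dots> = 0"
  proof (rule sum.neutral, rule ballI)
    fix bs assume bs: "bs \<in> BL k"
    show "(\<Sum>m\<in>{1..k}. \<Sum>i\<in>{1..m}. scale (sg m i) (Fk m (k + 1 - m) i as bs)) = 0"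
    proof (cases "True \<in> set bs")
      case False
      then show ?thesis by (simp add: Fk_def)
    next
      case True
      have hg': "homog G k ds (nm bs as)" using homog_nm[OF hg] bs by (simp add: BL_def)
      have "(\<Sum>m\<in>{1..k}. \<Sum>i\<in>{1..m}. scale (sg m i) (Fk m (k + 1 - m) i as bs))
         = scale ((-1) ^ (cnt bs - 1)) ((N ^^ (cnt bs - 1)) (\<Sum>m\<in>{1..k}. \<Sum>i\<in>{1..m}. scale (sg m i)
             (mu m (take (i - 1) (nm bs as) @ [mu (k + 1 - m) (take (k + 1 - m) (drop (i - 1) (nm bs as)))]
               @ drop (i - 1 + (k + 1 - m)) (nm bs as)))))"
        unfolding Fk_def using True
        by (simp add: Npow_sum Npow_scale scale_sum_right mult.commute)
      also have "\<dots> = 0"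
        using AI[OF k hg'] unfolding sg_def Let_def by simp
      finally show ?thesis .
    qed
  qed
  finally show ?thesis .
qed


lemma card1_sets: "{S. S \<subseteq> {1..n} \<and> card S = 1} = (\<lambda>j. {j}) ` {1..(n::nat)}"
  by (auto simp: card_1_singleton_iff)

lemma sum_card1: "(\<Sum>S\<in>{S. S \<subseteq> {1..n} \<and> card S = 1}. muS mu N n S w) = (\<Sum>j\<in>{1..n}. muS mu N n {j} w)"
  unfolding card1_sets by (subst sum.reindex) (auto simp: inj_on_def)

lemma T_CONV: "length w = n \<Longrightarrow> T n w = (\<Sum>k\<in>{1..n}. scale ((-1) ^ (k - 1))
          ((N ^^ (k - 1)) (\<Sum>S\<in>{S. S \<subseteq> {1..n} \<and> card S = k}. muS mu N n S w)))"
  unfolding T_def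
  by (rule CONV[where phi="\<lambda>k x. scale ((-1) ^ (k - 1)) ((N ^^ (k - 1)) x)", symmetric])
     (simp_all add: Npow_add scale_right_distrib)

lemma muS1: "length w = 1 \<Longrightarrow> muS mu N 1 {1} w = mu 1 w"
  unfolding muS_def by (cases w) auto

lemma mu_N_T: "n \<ge> 1 \<Longrightarrow> length w = n \<Longrightarrow> mu_N scale mu N n w = T n w"
proof -
  assume n: "n \<ge> 1" and l: "length w = n"
  show ?thesis
  proof (cases "n = 1")
    case True
    show ?thesis unfolding T_CONV[OF l] mu_N_def using True l sum_card1[of 1 w] muS1[of w] by simp
  next
    case False
    then show ?thesis unfolding T_CONV[OF l] mu_N_def by simp
  qed
qed

lemma mu_N_split: "n \<ge> 2 \<Longrightarrow> mu_N scale mu N n w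
   = (\<Sum>j\<in>{1..n}. muS mu N n {j} w) + eta_N scale mu N n (n + 1) w"
  unfolding mu_N_def eta_N_def
  by (subst sum.atLeast_Suc_atMost) (simp_all add: sum_card1[simplified] numeral_2_eq_2)

lemma ev_low: "1 \<le> r \<Longrightarrow> r \<le> n \<Longrightarrow> ev n (eta_N scale mu N n) r w = muS mu N n {r} w"
  unfolding ev_def idx_def eta_N_def by auto

lemma ev_out: "n + 1 < r \<Longrightarrow> ev n g r w = 0"
  unfolding ev_def idx_def by auto

lemma ev_top: "n \<ge> 1 \<Longrightarrow> length w = n \<Longrightarrow>
   ev n (eta_N scale mu N n) (n + 1) w = T n w - (\<Sum>j\<in>{1..n}. muS mu N n {j} w)"
proof -
  assume n: "n \<ge> 1" and l: "length w = n"
  show ?thesis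
  proof (cases "n = 1")
    case True
    then show ?thesis using mu_N_T[OF n l] l muS1[of w] unfolding ev_def idx_def mu_N_def by simp
  next
    case False
    then have "n \<ge> 2" using n by simp
    then show ?thesis using mu_N_T[OF n l] mu_N_split[of n w] unfolding ev_def idx_def
      by (simp add: eq_diff_eq add.commute)
  qed
qed

lemma ev_star_T: "n \<ge> 1 \<Longrightarrow> length w = n \<Longrightarrow> ev_star n (eta_N scale mu N n) w = T n w"
proof -
  assume n: "n \<ge> 1" and l: "length w = n"
  show ?thesis
  proof (cases "n = 1")
    case True
    then show ?thesis using mu_N_T[OF n l] l muS1[of w]
      unfolding ev_star_def idx_def mu_N_def eta_N_def by simp
  next
    case False
    then have n2: "n \<ge> 2" using n by simp
    have "ev_star n (eta_N scale mu N n) w = (\<Sum>j\<in>{1..n}. eta_N scale mu N n j w) + eta_N scale mu N n (n + 1) w"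
      unfolding ev_star_def idx_def using False by simp
    also have "(\<Sum>j\<in>{1..n}. eta_N scale mu N n j w) = (\<Sum>j\<in>{1..n}. muS mu N n {j} w)"
      by (rule sum.cong) (auto simp: eta_N_def)
    finally show ?thesis using mu_N_split[OF n2, of w] mu_N_T[OF n l] by simp
  qed
qed


definition er :: "nat \<Rightarrow> nat \<Rightarrow> bool list" where
  "er r k = map (\<lambda>j. j = r) [1..<k+1]"

lemma length_er[simp]: "length (er r k) = k"
  by (simp add: er_def)

lemma er_nth: "t < k \<Longrightarrow> er r k ! t = (Suc t = r)"
  by (simp add: er_def nth_upt del: upt_Suc)

lemma er_add: "er r (a + b) = er r a @ er (r - a) b"
  by (rule nth_equalityI) (auto simp: er_nth nth_append)

lemma er_none: "r = 0 \<or> a < r \<Longrightarrow> er r a = replicate a False"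
  by (rule nth_equalityI) (auto simp: er_nth)

lemma er_Suc: "er r (Suc b) = (r = 1) # er (r - 1) b"
  by (rule nth_equalityI) (auto simp: er_nth nth_Cons split: nat.split)

lemma muS_er: "length w = n \<Longrightarrow> muS mu N n {r} w = mu n (nm (er r n) w)"
  unfolding muS_def er_def
  by (rule arg_cong[where f="mu n"], rule nth_equalityI) (auto simp: nm_def nth_upt simp del: upt_Suc)

lemma pc_low:
  assumes lp: "length pre = p" and lm: "length mid = n" and lq: "length post = q"
    and mdef: "m = p + 1 + q" and idef: "i = p + 1" and n: "n \<ge> 1"
    and hm: "\<forall>x\<in>set mid. hom x"
    and r: "1 \<le> r" "r \<le> p + n + q"
  shows "pcomp scale m (eta_N scale mu N m) n (eta_N scale mu N n) i r ds (pre @ mid @ post)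
    = scale (sgn1 (int n * sum_list (take (i - 1) ds)))
        (mu m (nm (er r p) pre @ mu n (nm (er (r - p) n) mid) # nm (er (r - p - n) q) post))"
proof -
  have t1: "take (i - 1) (pre @ mid @ post) = pre" using lp idef by simp
  have t2: "take n (drop (i - 1) (pre @ mid @ post)) = mid" using lp lm idef by simp
  have t3: "drop (i - 1 + n) (pre @ mid @ post) = post" using lp lm idef by simp
  have gs: "ev_star n (eta_N scale mu N n) mid = T n mid" by (rule ev_star_T[OF n lm])
  have NX: "N (T n mid) = mu n (map N mid)" by (rule NT[OF n lm hm])
  have lw: "\<And>x. length (pre @ x # post) = m" using lp lq mdef by simp
  have em: "\<And>r. er r m = er r p @ er (r - p) (Suc q)" using mdef er_add[of _ p "Suc q"] by simp
  define Z where "Z = mu m (nm (er r p) pre @ mu n (nm (er (r - p) n) mid) # nm (er (r - p - n) q) post)"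
  have "pcomp scale m (eta_N scale mu N m) n (eta_N scale mu N n) i r ds (pre @ mid @ post)
      = scale (sgn1 (int n * sum_list (take (i - 1) ds))) Z"
  proof (cases "r \<le> p")
    case True
    have v: "ev m (eta_N scale mu N m) r (pre @ [T n mid] @ post) = Z"
    proof -
      have "ev m (eta_N scale mu N m) r (pre @ [T n mid] @ post) = mu m (nm (er r m) (pre @ T n mid # post))"
        using ev_low[of r m] muS_er[OF lw] r True mdef by simp
      also have "\<dots> = Z" unfolding Z_def em using True lp lm lq
        by (simp add: er_none nm_replicate NX)
      finally show ?thesis .
    qed
    show ?thesis unfolding pcomp_def Let_def t1 t2 t3 gs using True r idef v by simp
  next
    case False
    show ?thesis
    proof (cases "r \<le> p + n")
      case True
      have v: "ev m (eta_N scale mu N m) i (pre @ [ev n (eta_N scale mu N n) (r - i + 1) mid] @ post) = Z"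
      proof -
        have ri: "r - i + 1 = r - p" using False idef by simp
        have "ev n (eta_N scale mu N n) (r - i + 1) mid = mu n (nm (er (r - p) n) mid)"
          unfolding ri using ev_low[of "r - p" n] muS_er[OF lm] False True by simp
        moreover have "ev m (eta_N scale mu N m) i (pre @ [x] @ post) = mu m (nm (er i m) (pre @ x # post))" for x
          using ev_low[of i m] muS_er[OF lw] idef mdef by simp
        moreover have "er i m = replicate p False @ True # replicate q False"
          unfolding em using idef by (simp add: er_none er_Suc)
        ultimately show ?thesis unfolding Z_def using False True lp lq
          by (simp add: er_none nm_replicate)
      qed
      show ?thesis unfolding pcomp_def Let_def t1 t2 t3 gs using False True r idef v by simp
    next
      assume False2: "\<not> r \<le> p + n"
      have v: "ev m (eta_N scale mu N m) (r - n + 1) (pre @ [T n mid] @ post) = Z"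
      proof -
        have "ev m (eta_N scale mu N m) (r - n + 1) (pre @ [T n mid] @ post)
           = mu m (nm (er (r - n + 1) m) (pre @ T n mid # post))"
          using ev_low[of "r - n + 1" m] muS_er[OF lw] False2 r mdef by simp
        moreover have "er (r - n + 1) m = replicate p False @ False # er (r - p - n) q"
        proof -
          have a: "r - n + 1 - p = Suc (r - p - n)" using False2 by simp
          have b: "er (r - n + 1) p = replicate p False" using False2 by (simp add: er_none)
          show ?thesis unfolding em a b using False2 by (simp add: er_Suc)
        qed
        ultimately show ?thesis unfolding Z_def using False2 lp lm lq
          by (simp add: er_none nm_replicate NX)
      qed
      show ?thesis unfolding pcomp_def Let_def t1 t2 t3 gs using False False2 r idef mdef v by simp
    qed
  qed
  then show ?thesis unfolding Z_def .
qed


lemma sgn1_add: "(sgn1 (a + b) :: 'k) = sgn1 a * sgn1 b"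
  unfolding sgn1_def by auto

lemma pc_low2:
  assumes k: "length as = k" and h: "\<forall>x\<in>set as. hom x"
    and m: "1 \<le> m" "m \<le> k" and i: "1 \<le> i" "i \<le> m" and n: "n = k + 1 - m"
    and r: "1 \<le> r" "r \<le> k"
  shows "scale (sgn1 (int i * (int n + 1))) (pcomp scale m (eta_N scale mu N m) n (eta_N scale mu N n) i r ds as)
    = scale (sgn1 (int i * (int n + 1) + int n * sum_list (take (i - 1) ds)))
        (mu m (take (i - 1) (nm (er r k) as) @ [mu n (take n (drop (i - 1) (nm (er r k) as)))]
           @ drop (i - 1 + n) (nm (er r k) as)))"
proof -
  define pre where "pre = take (i - 1) as"
  define mid where "mid = take n (drop (i - 1) as)"
  define post where "post = drop (i - 1 + n) as"
  define p where "p = i - 1"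
  define q where "q = m - i"
  have lp: "length pre = p" using k m i by (simp add: pre_def p_def)
  have lm: "length mid = n" using k m i n by (simp add: mid_def)
  have lq: "length post = q" using k m i n by (simp add: post_def q_def)
  have asd: "as = pre @ mid @ post" unfolding pre_def mid_def post_def
    by (metis append_take_drop_id drop_drop add.commute)
  have hm: "\<forall>x\<in>set mid. hom x" using h unfolding asd by auto
  have n1: "n \<ge> 1" using n m by simp
  have mm: "m = p + 1 + q" and ii: "i = p + 1" using i m by (auto simp: p_def q_def)
  have kk: "k = p + (n + q)" using k asd lp lm lq by simp
  have r': "r \<le> p + n + q" using r kk by simp
  have c: "nm (er r k) as = nm (er r p) pre @ nm (er (r - p) n) mid @ nm (er (r - p - n) q) post"
    unfolding kk er_add asd using lp lm lq by simp
  have "pcomp scale m (eta_N scale mu N m) n (eta_N scale mu N n) i r ds as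
    = scale (sgn1 (int n * sum_list (take (i - 1) ds)))
        (mu m (nm (er r p) pre @ mu n (nm (er (r - p) n) mid) # nm (er (r - p - n) q) post))"
    unfolding asd by (rule pc_low[OF lp lm lq mm ii n1 hm r(1) r'])
  moreover have "take (i - 1) (nm (er r k) as) = nm (er r p) pre"
    "take n (drop (i - 1) (nm (er r k) as)) = nm (er (r - p) n) mid"
    "drop (i - 1 + n) (nm (er r k) as) = nm (er (r - p - n) q) post"
    unfolding c using lp lm lq ii by simp_all
  ultimately show ?thesis by (simp add: sgn1_add)
qed

lemma NS_low:
  assumes k: "k \<ge> 1" and hg: "homog G k ds as" and r: "1 \<le> r" "r \<le> k"
  shows "(\<Sum>m\<in>{1..k}. let n = k + 1 - m in \<Sum>i\<in>{1..m}.
           scale (sgn1 (int i * (int n + 1))) (pcomp scale m (eta_N scale mu N m) n (eta_N scale mu N n) i r ds as)) = 0"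
proof -
  have len: "length as = k" using hg by (simp add: homog_def)
  have h: "\<forall>x\<in>set as. hom x" by (rule homog_hom[OF hg])
  have hg': "homog G k ds (nm (er r k) as)" using homog_nm[OF hg] by simp
  let ?c = "nm (er r k) as"
  have "(\<Sum>m\<in>{1..k}. \<Sum>i\<in>{1..m}.
           scale (sgn1 (int i * (int (k + 1 - m) + 1))) (pcomp scale m (eta_N scale mu N m) (k + 1 - m) (eta_N scale mu N (k + 1 - m)) i r ds as))
     = (\<Sum>m\<in>{1..k}. \<Sum>i\<in>{1..m}.
           scale (sgn1 (int i * (int (k + 1 - m) + 1) + int (k + 1 - m) * sum_list (take (i - 1) ds)))
             (mu m (take (i - 1) ?c @ [mu (k + 1 - m) (take (k + 1 - m) (drop (i - 1) ?c))] @ drop (i - 1 + (k + 1 - m)) ?c)))"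
    by (intro sum.cong refl) (rule pc_low2[OF len h _ _ _ _ refl r]; simp)
  also have "\<dots> = 0" using AI[OF k hg'] by (simp add: Let_def)
  finally show ?thesis by (simp add: Let_def)
qed


lemma sum_ev: "(\<Sum>j\<in>{1..<n+2}. ev n g j w) = ev_star n g w"
proof -
  have "(\<Sum>j\<in>{1..<n+2}. ev n g j w) = (\<Sum>j\<in>{1..<n+2} \<inter> idx n. g j w)"
    unfolding ev_def by (simp add: sum.inter_restrict)
  also have "{1..<n+2} \<inter> idx n = idx n" by (auto simp: idx_def)
  finally show ?thesis unfolding ev_star_def .
qed

lemma pc_sum:
  assumes lp: "length pre = p" and lm: "length mid = n" and lq: "length post = q"
    and n: "n \<ge> 1" and hm: "\<forall>x\<in>set mid. hom x"
  shows "(\<Sum>r\<in>{1..p+n+q+1}. pcomp scale (p + 1 + q) (eta_N scale mu N (p + 1 + q)) n (eta_N scale mu N n) (p + 1) r ds (pre @ mid @ post))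
    = scale (sgn1 (int n * sum_list (take p ds))) (T (p + 1 + q) (pre @ T n mid # post))"
proof -
  let ?m = "p + 1 + q" and ?i = "p + 1"
  have t1: "take (?i - 1) (pre @ mid @ post) = pre" using lp by simp
  have t2: "take n (drop (?i - 1) (pre @ mid @ post)) = mid" using lp lm by simp
  have t3: "drop (?i - 1 + n) (pre @ mid @ post) = post" using lp lm by simp
  have gs: "ev_star n (eta_N scale mu N n) mid = T n mid" by (rule ev_star_T[OF n lm])
  define eps where "eps = (sgn1 (int n * sum_list (take p ds)) :: 'k)"
  define f where "f j x = ev ?m (eta_N scale mu N ?m) j (pre @ [x] @ post)" for j x
  define g where "g j = ev n (eta_N scale mu N n) j mid" for j
  define X where "X = T n mid"
  define H where "H r = (if 1 \<le> r \<and> r \<le> ?i - 1 then f r X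
        else if ?i \<le> r \<and> r \<le> ?i + n - 1 then f ?i (g (r - ?i + 1))
        else if ?i + n \<le> r \<and> r \<le> ?m + n - 1 then f (r - n + 1) X
        else if r = ?m + n then f ?i (g (n + 1)) + f (?m + 1) X else 0)" for r
  have pc: "pcomp scale ?m (eta_N scale mu N ?m) n (eta_N scale mu N n) ?i r ds (pre @ mid @ post) = scale eps (H r)" for r
    unfolding pcomp_def Let_def t1 t2 t3 gs H_def f_def g_def eps_def X_def by simp
  have fi: "f ?i x = mu ?m (map N pre @ x # map N post)" for x
  proof -
    have e: "er ?i ?m = replicate p False @ True # replicate q False"
      using er_add[of ?i p "Suc q"] by (simp add: er_none er_Suc)
    have "f ?i x = mu ?m (nm (er ?i ?m) (pre @ x # post))"
      unfolding f_def using ev_low[of ?i ?m] muS_er[of "pre @ x # post" ?m] lp lq by simp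
    then show ?thesis unfolding e using lp lq by (simp add: nm_replicate)
  qed
  have fi_lin: "f ?i (sum h A) = (\<Sum>a\<in>A. f ?i (h a))" for h :: "nat \<Rightarrow> 'v" and A
    unfolding fi by (rule slot_sum) (simp add: lp lq)
  have gsum: "(\<Sum>j\<in>{1..<n+2}. g j) = X"
    unfolding g_def X_def sum_ev gs ..
  have fsum: "(\<Sum>j\<in>{1..<?m+2}. f j X) = T ?m (pre @ X # post)"
    unfolding f_def using sum_ev[of ?m "eta_N scale mu N ?m" "pre @ [X] @ post"]
      ev_star_T[of ?m "pre @ X # post"] lp lq by simp
  have "(\<Sum>r\<in>{1..p+n+q+1}. H r) = (\<Sum>r\<in>{1..<p+n+q+1}. H r) + H (p+n+q+1)"
    by (simp add: atLeastLessThanSuc_atLeastAtMost[symmetric] sum.atLeastLessThan_Suc del: atLeastLessThanSuc_atLeastAtMost)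
  also have "(\<Sum>r\<in>{1..<p+n+q+1}. H r) = (\<Sum>r\<in>{1..<p+1}. H r) + (\<Sum>r\<in>{p+1..<p+n+1}. H r) + (\<Sum>r\<in>{p+n+1..<p+n+q+1}. H r)"
  proof -
    have c1: "(\<Sum>r\<in>{1..<p+1}. H r) + (\<Sum>r\<in>{p+1..<p+n+1}. H r) = (\<Sum>r\<in>{1..<p+n+1}. H r)"
      by (rule sum.atLeastLessThan_concat) simp_all
    have c2: "(\<Sum>r\<in>{1..<p+n+1}. H r) + (\<Sum>r\<in>{p+n+1..<p+n+q+1}. H r) = (\<Sum>r\<in>{1..<p+n+q+1}. H r)"
      by (rule sum.atLeastLessThan_concat) simp_all
    show ?thesis unfolding c2[symmetric] c1[symmetric] ..
  qed
  also have "(\<Sum>r\<in>{1..<p+1}. H r) = (\<Sum>j\<in>{1..<p+1}. f j X)"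
    by (rule sum.cong) (auto simp: H_def)
  also have "(\<Sum>r\<in>{p+1..<p+n+1}. H r) = (\<Sum>r\<in>{p+1..<p+n+1}. f ?i (g (r - p)))"
    by (rule sum.cong) (auto simp: H_def Suc_diff_Suc)
  also have "\<dots> = (\<Sum>j\<in>{1..<n+1}. f ?i (g j))"
    using sum.shift_bounds_nat_ivl[of "\<lambda>r. f ?i (g (r - p))" 1 p "n + 1"] by (simp add: ac_simps)
  also have "(\<Sum>r\<in>{p+n+1..<p+n+q+1}. H r) = (\<Sum>r\<in>{p+n+1..<p+n+q+1}. f (r - n + 1) X)"
    by (rule sum.cong) (auto simp: H_def)
  also have "\<dots> = (\<Sum>j\<in>{p+2..<p+q+2}. f j X)"
    by (rule sum.reindex_bij_witness[where i="\<lambda>j. j + n - 1" and j="\<lambda>r. r - n + 1"]) (use n in auto)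
  also have "H (p+n+q+1) = f ?i (g (n + 1)) + f (?m + 1) X"
    using n by (simp add: H_def)
  finally have "(\<Sum>r\<in>{1..p+n+q+1}. H r) = (\<Sum>j\<in>{1..<p+1}. f j X) + (\<Sum>j\<in>{1..<n+1}. f ?i (g j))
      + (\<Sum>j\<in>{p+2..<p+q+2}. f j X) + (f ?i (g (n + 1)) + f (?m + 1) X)" .
  also have "\<dots> = (\<Sum>j\<in>{1..<p+1}. f j X) + f ?i (\<Sum>j\<in>{1..<n+2}. g j)
      + (\<Sum>j\<in>{p+2..<p+q+2}. f j X) + f (?m + 1) X"
  proof -
    have fg: "f ?i (\<Sum>j\<in>{1..<n+2}. g j) = (\<Sum>j\<in>{1..<n+1}. f ?i (g j)) + f ?i (g (n+1))"
      unfolding fi_lin using sum.atLeastLessThan_Suc[of 1 "n+1" "\<lambda>j. f ?i (g j)"] by simp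
    show ?thesis unfolding fg by (simp add: ac_simps)
  qed
  also have "\<dots> = (\<Sum>j\<in>{1..<?m+2}. f j X)"
  proof -
    have "(\<Sum>j\<in>{1..<?m+2}. f j X) = (\<Sum>j\<in>{1..<p+q+2}. f j X) + f (?m + 1) X"
      using sum.atLeastLessThan_Suc[of 1 "p+q+2" "\<lambda>j. f j X"] by simp
    also have "(\<Sum>j\<in>{1..<p+q+2}. f j X) = (\<Sum>j\<in>{1..<p+2}. f j X) + (\<Sum>j\<in>{p+2..<p+q+2}. f j X)"
      by (rule sum.atLeastLessThan_concat[symmetric]) simp_all
    also have "(\<Sum>j\<in>{1..<p+2}. f j X) = (\<Sum>j\<in>{1..<p+1}. f j X) + f ?i X"
      using sum.atLeastLessThan_Suc[of 1 "p+1" "\<lambda>j. f j X"] by simp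
    finally show ?thesis using gsum by simp
  qed
  finally have HS: "(\<Sum>r\<in>{1..p+n+q+1}. H r) = T ?m (pre @ X # post)" using fsum by simp
  show ?thesis unfolding pc scale_sum_right[symmetric] HS X_def eps_def ..
qed


lemma pc_sum2:
  assumes k: "length as = k" and h: "\<forall>x\<in>set as. hom x"
    and m: "1 \<le> m" "m \<le> k" and i: "1 \<le> i" "i \<le> m" and n: "n = k + 1 - m"
  shows "(\<Sum>r\<in>{1..k+1}. pcomp scale m (eta_N scale mu N m) n (eta_N scale mu N n) i r ds as)
    = scale (sgn1 (int n * sum_list (take (i - 1) ds)))
        (T m (take (i - 1) as @ [T n (take n (drop (i - 1) as))] @ drop (i - 1 + n) as))"
proof -
  define pre where "pre = take (i - 1) as"
  define mid where "mid = take n (drop (i - 1) as)"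
  define post where "post = drop (i - 1 + n) as"
  define p where "p = i - 1"
  define q where "q = m - i"
  have lp: "length pre = p" using k m i by (simp add: pre_def p_def)
  have lm: "length mid = n" using k m i n by (simp add: mid_def)
  have lq: "length post = q" using k m i n by (simp add: post_def q_def)
  have asd: "as = pre @ mid @ post" unfolding pre_def mid_def post_def
    by (metis append_take_drop_id drop_drop add.commute)
  have hm: "\<forall>x\<in>set mid. hom x" using h unfolding asd by auto
  have n1: "n \<ge> 1" using n m by simp
  have mm: "m = p + 1 + q" and ii: "i = p + 1" using i m by (auto simp: p_def q_def)
  have kk: "k = p + n + q" using k asd lp lm lq by simp
  show ?thesis
    using pc_sum[OF lp lm lq n1 hm, of ds]
    by (simp add: mm ii asd kk lp lm lq)
qed

lemma NS_top:
  assumes k: "k \<ge> 2" and hg: "homog G k ds as"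
  shows "(\<Sum>m\<in>{1..k}. let n = k + 1 - m in \<Sum>i\<in>{1..m}.
           scale (sgn1 (int i * (int n + 1))) (pcomp scale m (eta_N scale mu N m) n (eta_N scale mu N n) i (k + 1) ds as)) = 0"
proof -
  have k1: "k \<ge> 1" using k by simp
  have len: "length as = k" using hg by (simp add: homog_def)
  have h: "\<forall>x\<in>set as. hom x" by (rule homog_hom[OF hg])
  define P where "P m i r = pcomp scale m (eta_N scale mu N m) (k + 1 - m) (eta_N scale mu N (k + 1 - m)) i r ds as" for m i r
  define s where "s m i = (sgn1 (int i * (int (k + 1 - m) + 1)) :: 'k)" for m i
  define A where "A m i = scale (sgn1 (int i * (int (k + 1 - m) + 1) + int (k + 1 - m) * sum_list (take (i - 1) ds)))
        (T m (take (i - 1) as @ [T (k + 1 - m) (take (k + 1 - m) (drop (i - 1) as))] @ drop (i - 1 + (k + 1 - m)) as))" for m i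
  have each: "scale (s m i) (P m i (k + 1)) = A m i - (\<Sum>r\<in>{1..k}. scale (s m i) (P m i r))"
    if "m \<in> {1..k}" "i \<in> {1..m}" for m i
  proof -
    have "(\<Sum>r\<in>{1..k+1}. P m i r) = (\<Sum>r\<in>{1..k}. P m i r) + P m i (k + 1)"
      by simp
    moreover have "(\<Sum>r\<in>{1..k+1}. P m i r) = scale (sgn1 (int (k + 1 - m) * sum_list (take (i - 1) ds)))
        (T m (take (i - 1) as @ [T (k + 1 - m) (take (k + 1 - m) (drop (i - 1) as))] @ drop (i - 1 + (k + 1 - m)) as))"
      unfolding P_def using that by (intro pc_sum2[OF len h]) auto
    ultimately have "P m i (k + 1) = scale (sgn1 (int (k + 1 - m) * sum_list (take (i - 1) ds)))
        (T m (take (i - 1) as @ [T (k + 1 - m) (take (k + 1 - m) (drop (i - 1) as))] @ drop (i - 1 + (k + 1 - m)) as))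
        - (\<Sum>r\<in>{1..k}. P m i r)"
      by (simp add: eq_diff_eq add.commute)
    then show ?thesis
      unfolding A_def s_def by (simp add: scale_right_diff_distrib scale_sum_right sgn1_add)
  qed
  have "(\<Sum>m\<in>{1..k}. \<Sum>i\<in>{1..m}. scale (s m i) (P m i (k + 1)))
      = (\<Sum>m\<in>{1..k}. \<Sum>i\<in>{1..m}. A m i) - (\<Sum>m\<in>{1..k}. \<Sum>i\<in>{1..m}. \<Sum>r\<in>{1..k}. scale (s m i) (P m i r))"
  proof -
    have "(\<Sum>m\<in>{1..k}. \<Sum>i\<in>{1..m}. scale (s m i) (P m i (k + 1)))
      = (\<Sum>m\<in>{1..k}. \<Sum>i\<in>{1..m}. A m i - (\<Sum>r\<in>{1..k}. scale (s m i) (P m i r)))"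
      by (intro sum.cong refl each) auto
    then show ?thesis by (simp add: sum_subtractf)
  qed
  also have "(\<Sum>m\<in>{1..k}. \<Sum>i\<in>{1..m}. A m i) = 0"
    using AINF_T[OF k1 hg] unfolding A_def Let_def by simp
  also have "(\<Sum>m\<in>{1..k}. \<Sum>i\<in>{1..m}. \<Sum>r\<in>{1..k}. scale (s m i) (P m i r))
      = (\<Sum>r\<in>{1..k}. \<Sum>m\<in>{1..k}. \<Sum>i\<in>{1..m}. scale (s m i) (P m i r))"
    by (subst sum.swap, rule sum.cong[OF refl], rule sum.swap)
  also have "\<dots> = 0"
  proof (rule sum.neutral, rule ballI)
    fix r assume "r \<in> {1..k}"
    then show "(\<Sum>m\<in>{1..k}. \<Sum>i\<in>{1..m}. scale (s m i) (P m i r)) = 0"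
      using NS_low[OF k1 hg, of r] unfolding s_def P_def Let_def by simp
  qed
  finally show ?thesis unfolding s_def P_def Let_def by simp
qed


lemma ml_muS: assumes n: "n \<ge> 1" shows "multilinear scale n (muS mu N n S)"
  unfolding multilinear_def
proof (intro allI impI)
  fix as :: "'v list" and j x y and c :: 'k
  assume a: "length as = n \<and> j < n"
  define F0 where "F0 = map (\<lambda>i. if i \<in> S then as ! (i - 1) else N (as ! (i - 1))) [1..<n+1]"
  define phi where "phi v = (if Suc j \<in> S then v else N v)" for v
  have lF: "length F0 = n" by (simp add: F0_def)
  have upd: "muS mu N n S (as[j := v]) = mu n (F0[j := phi v])" for v
    unfolding muS_def F0_def phi_def
    by (rule arg_cong[where f="mu n"], rule nth_equalityI)
       (use a in \<open>auto simp: nth_list_update nth_upt simp del: upt_Suc\<close>)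
  have M: "multilinear scale n (mu n)" by (rule MLT[OF n])
  have pa: "phi (x + y) = phi x + phi y" and ps: "phi (scale c x) = scale c (phi x)"
    by (auto simp: phi_def Nadd Nscale)
  show "muS mu N n S (as[j := x + y]) = muS mu N n S (as[j := x]) + muS mu N n S (as[j := y]) \<and>
        muS mu N n S (as[j := scale c x]) = scale c (muS mu N n S (as[j := x]))"
    unfolding upd pa ps using M a lF unfolding multilinear_def by simp
qed

lemma hd_muS: assumes n: "n \<ge> 1" shows "has_degree G n (int n - 2) (muS mu N n S)"
  unfolding has_degree_def
proof (intro allI impI)
  fix ds as assume hg: "homog G n ds as"
  have "homog G n ds (map (\<lambda>i. if i \<in> S then as ! (i - 1) else N (as ! (i - 1))) [1..<n+1])"
    using hg unfolding homog_def by (auto simp: nth_upt NG simp del: upt_Suc)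
  then show "muS mu N n S as \<in> G (sum_list ds + (int n - 2))"
    unfolding muS_def using DG[OF n] unfolding has_degree_def by blast
qed

lemma ml_zero: "multilinear scale n (\<lambda>w. 0)"
  unfolding multilinear_def by simp

lemma ml_add: "multilinear scale n f \<Longrightarrow> multilinear scale n g \<Longrightarrow> multilinear scale n (\<lambda>w. f w + g w)"
  unfolding multilinear_def by (simp add: scale_right_distrib ac_simps)

lemma ml_sum: "finite A \<Longrightarrow> (\<And>a. a \<in> A \<Longrightarrow> multilinear scale n (f a)) \<Longrightarrow> multilinear scale n (\<lambda>w. \<Sum>a\<in>A. f a w)"
  by (induct A rule: finite_induct) (auto intro: ml_zero ml_add)

lemma ml_scN: "multilinear scale n f \<Longrightarrow> multilinear scale n (\<lambda>w. scale c ((N ^^ j) (f w)))"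
  unfolding multilinear_def by (simp add: Npow_add Npow_scale scale_right_distrib scale_left_commute)

lemma hd_zero: "has_degree G n e (\<lambda>w. 0)"
  unfolding has_degree_def using subspace_0[OF SUB] by simp

lemma hd_add: "has_degree G n e f \<Longrightarrow> has_degree G n e g \<Longrightarrow> has_degree G n e (\<lambda>w. f w + g w)"
  unfolding has_degree_def using subspace_add[OF SUB] by blast

lemma hd_sum: "finite A \<Longrightarrow> (\<And>a. a \<in> A \<Longrightarrow> has_degree G n e (f a)) \<Longrightarrow> has_degree G n e (\<lambda>w. \<Sum>a\<in>A. f a w)"
  by (induct A rule: finite_induct) (auto intro: hd_zero hd_add)

lemma NGpow: "x \<in> G d \<Longrightarrow> (N ^^ j) x \<in> G d"
  by (induct j) (auto simp: NG)

lemma hd_scN: "has_degree G n e f \<Longrightarrow> has_degree G n e (\<lambda>w. scale c ((N ^^ j) (f w)))"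
  unfolding has_degree_def using subspace_scale[OF SUB] NGpow by blast

lemma big_ok:
  assumes n: "n \<ge> 1" and that: "finite K"
  shows "multilinear scale n (\<lambda>as. \<Sum>k\<in>K. scale ((-1) ^ (k - 1))
          ((N ^^ (k - 1)) (\<Sum>S\<in>{S. S \<subseteq> {1..n} \<and> card S = k}. muS mu N n S as)))"
    and "has_degree G n (int n - 2) (\<lambda>as. \<Sum>k\<in>K. scale ((-1) ^ (k - 1))
          ((N ^^ (k - 1)) (\<Sum>S\<in>{S. S \<subseteq> {1..n} \<and> card S = k}. muS mu N n S as)))"
proof -
  have fin: "finite {S. S \<subseteq> {1..n} \<and> card S = k}" for k
    by (rule finite_subset[of _ "Pow {1..n}"]) auto
  show "multilinear scale n (\<lambda>as. \<Sum>k\<in>K. scale ((-1) ^ (k - 1))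
          ((N ^^ (k - 1)) (\<Sum>S\<in>{S. S \<subseteq> {1..n} \<and> card S = k}. muS mu N n S as)))"
    by (intro ml_sum that ml_scN fin ml_muS[OF n])
  show "has_degree G n (int n - 2) (\<lambda>as. \<Sum>k\<in>K. scale ((-1) ^ (k - 1))
          ((N ^^ (k - 1)) (\<Sum>S\<in>{S. S \<subseteq> {1..n} \<and> card S = k}. muS mu N n S as)))"
    by (intro hd_sum that hd_scN fin hd_muS[OF n])
qed

lemma eta_ok:
  assumes n: "n \<ge> 1" and r: "r \<in> idx n"
  shows "multilinear scale n (eta_N scale mu N n r) \<and> has_degree G n (int n - 2) (eta_N scale mu N n r)"
proof (cases "r \<le> n")
  case True
  then have "1 \<le> r" using r by (auto simp: idx_def split: if_splits)
  then have e: "eta_N scale mu N n r = muS mu N n {r}" using True by (auto simp: eta_N_def)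
  show ?thesis unfolding e using ml_muS[OF n] hd_muS[OF n] by simp
next
  case False
  then have r2: "r = n + 1" "n \<ge> 2" using r n by (auto simp: idx_def split: if_splits)
  then have e: "eta_N scale mu N n r = (\<lambda>as. \<Sum>k\<in>{2..n}. scale ((-1) ^ (k - 1))
          ((N ^^ (k - 1)) (\<Sum>S\<in>{S. S \<subseteq> {1..n} \<and> card S = k}. muS mu N n S as)))"
    by (auto simp: eta_N_def)
  show ?thesis unfolding e using big_ok[OF n] by simp
qed

lemma muN_ok:
  assumes n: "n \<ge> 1"
  shows "multilinear scale n (mu_N scale mu N n) \<and> has_degree G n (int n - 2) (mu_N scale mu N n)"
proof (cases "n = 1")
  case True
  have e: "mu_N scale mu N n = mu 1" using True by (auto simp: mu_N_def)
  show ?thesis unfolding e using MLT[OF n] DG[OF n] True by simp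
next
  case False
  then have e: "mu_N scale mu N n = (\<lambda>as. \<Sum>k\<in>{1..n}. scale ((-1) ^ (k - 1))
          ((N ^^ (k - 1)) (\<Sum>S\<in>{S. S \<subseteq> {1..n} \<and> card S = k}. muS mu N n S as)))"
    by (auto simp: mu_N_def)
  show ?thesis unfolding e using big_ok[OF n] by simp
qed

end


theorem theorem6p14:
  fixes scale :: "'k::field_char_0 \<Rightarrow> 'v::ab_group_add \<Rightarrow> 'v"
    and G :: "int \<Rightarrow> 'v set"
    and mu :: "nat \<Rightarrow> 'v list \<Rightarrow> 'v"
    and N :: "'v \<Rightarrow> 'v"
  assumes "A_infinity scale G mu"
    and "strict_homotopy_Nijenhuis scale G mu N"
  shows "NS_infinity scale G (eta_N scale mu N) \<and> A_infinity scale G (mu_N scale mu N)"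
proof -
  have gv: "graded_vs scale G" using assms(1) by (simp add: A_infinity_def)
  have VS: "vector_space scale" using gv by (simp add: graded_vs_def)
  have lin: "Vector_Spaces.linear scale scale N" using assms(2) by (simp add: strict_homotopy_Nijenhuis_def)
  have L: "nsx scale G mu N"
    unfolding nsx_def nsx_axioms_def
  proof (intro conjI allI impI)
    show "vector_space scale" by (rule VS)
    show "N (x + y) = N x + N y" for x y using lin by (simp add: Vector_Spaces.linear_iff)
    show "N (scale c x) = scale c (N x)" for c x using lin by (simp add: Vector_Spaces.linear_iff)
    show "N x \<in> G d" if "x \<in> G d" for x d using assms(2) that by (auto simp: strict_homotopy_Nijenhuis_def)
    show "module.subspace scale (G d)" for d using gv by (simp add: graded_vs_def)
    show "multilinear scale n (mu n)" if "n \<ge> 1" for n using assms(1) that by (simp add: A_infinity_def)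
    show "has_degree G n (int n - 2) (mu n)" if "n \<ge> 1" for n using assms(1) that by (simp add: A_infinity_def)
  next
    fix n ds as assume "n \<ge> 1" "homog G n ds as"
    then show "mu n (map N as) =
        (\<Sum>k\<in>{1..n}. scale ((-1) ^ (k - 1))
           ((N ^^ k) (\<Sum>S\<in>{S. S \<subseteq> {1..n} \<and> card S = k}. muS mu N n S as)))"
      using assms(2) unfolding strict_homotopy_Nijenhuis_def by blast
  next
    fix k ds as assume "k \<ge> 1" "homog G k ds as"
    then show "(\<Sum>m\<in>{1..k}. let n = k + 1 - m in \<Sum>i\<in>{1..m}.
           scale (sgn1 (int i * (int n + 1) + int n * sum_list (take (i - 1) ds)))
             (mu m (take (i - 1) as @ [mu n (take n (drop (i - 1) as))] @ drop (i - 1 + n) as))) = 0"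
      using assms(1) unfolding A_infinity_def by blast
  qed
  interpret I: nsx scale G mu N by (rule L)
  have NS: "NS_infinity scale G (eta_N scale mu N)"
    unfolding NS_infinity_def
  proof (intro conjI allI impI ballI)
    show "graded_vs scale G" by (rule gv)
    fix n r assume "n \<ge> 1" "r \<in> idx n"
    then show "multilinear scale n (eta_N scale mu N n r)" "has_degree G n (int n - 2) (eta_N scale mu N n r)"
      using I.eta_ok by auto
  next
    fix k r ds as assume k: "k \<ge> 1" and r: "r \<in> idx k" and hg: "homog G k ds as"
    show "(\<Sum>m\<in>{1..k}. let n = k + 1 - m in \<Sum>i\<in>{1..m}.
           scale (sgn1 (int i * (int n + 1))) (pcomp scale m (eta_N scale mu N m) n (eta_N scale mu N n) i r ds as)) = 0"
    proof (cases "r \<le> k")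
      case True
      then have "1 \<le> r" using r by (auto simp: idx_def split: if_splits)
      then show ?thesis using I.NS_low[OF k hg _ True] by blast
    next
      case False
      then have "r = k + 1" "k \<ge> 2" using r k by (auto simp: idx_def split: if_splits)
      then show ?thesis using I.NS_top[of k ds as] hg by simp
    qed
  qed
  have AT: "A_infinity scale G (mu_N scale mu N)"
    unfolding A_infinity_def
  proof (intro conjI allI impI)
    show "graded_vs scale G" by (rule gv)
    fix n :: nat assume "n \<ge> 1"
    then show "multilinear scale n (mu_N scale mu N n)" "has_degree G n (int n - 2) (mu_N scale mu N n)"
      using I.muN_ok by auto
  next
    fix k :: nat and ds as assume k: "k \<ge> 1" and hg: "homog G k ds as"
    have len: "length as = k" using hg by (simp add: homog_def)
    have "(\<Sum>m\<in>{1..k}. let n = k + 1 - m in \<Sum>i\<in>{1..m}.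
           scale (sgn1 (int i * (int n + 1) + int n * sum_list (take (i - 1) ds)))
             (mu_N scale mu N m (take (i - 1) as @ [mu_N scale mu N n (take n (drop (i - 1) as))] @ drop (i - 1 + n) as)))
        = (\<Sum>m\<in>{1..k}. let n = k + 1 - m in \<Sum>i\<in>{1..m}.
           scale (sgn1 (int i * (int n + 1) + int n * sum_list (take (i - 1) ds)))
             (I.T m (take (i - 1) as @ [I.T n (take n (drop (i - 1) as))] @ drop (i - 1 + n) as)))"
      unfolding Let_def
    proof (intro sum.cong refl)
      fix m i assume m: "m \<in> {1..k}" and i: "i \<in> {1..m}"
      have l1: "length (take (k + 1 - m) (drop (i - 1) as)) = k + 1 - m" using m i len by auto
      have e1: "mu_N scale mu N (k + 1 - m) (take (k + 1 - m) (drop (i - 1) as)) = I.T (k + 1 - m) (take (k + 1 - m) (drop (i - 1) as))"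
        using m by (intro I.mu_N_T[OF _ l1]) auto
      have l2: "length (take (i - 1) as @ [I.T (k + 1 - m) (take (k + 1 - m) (drop (i - 1) as))] @ drop (i - 1 + (k + 1 - m)) as) = m"
        using m i len by auto
      show "scale (sgn1 (int i * (int (k + 1 - m) + 1) + int (k + 1 - m) * sum_list (take (i - 1) ds)))
             (mu_N scale mu N m (take (i - 1) as @ [mu_N scale mu N (k + 1 - m) (take (k + 1 - m) (drop (i - 1) as))] @ drop (i - 1 + (k + 1 - m)) as))
          = scale (sgn1 (int i * (int (k + 1 - m) + 1) + int (k + 1 - m) * sum_list (take (i - 1) ds)))
             (I.T m (take (i - 1) as @ [I.T (k + 1 - m) (take (k + 1 - m) (drop (i - 1) as))] @ drop (i - 1 + (k + 1 - m)) as))"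
        unfolding e1 using m by (subst I.mu_N_T[OF _ l2]) auto
    qed
    also have "\<dots> = 0" by (rule I.AINF_T[OF k hg])
    finally show "(\<Sum>m\<in>{1..k}. let n = k + 1 - m in \<Sum>i\<in>{1..m}.
           scale (sgn1 (int i * (int n + 1) + int n * sum_list (take (i - 1) ds)))
             (mu_N scale mu N m (take (i - 1) as @ [mu_N scale mu N n (take n (drop (i - 1) as))] @ drop (i - 1 + n) as))) = 0" .
  qed
  show ?thesis using NS AT by simp
qed

end
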